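(* Let $\Phi=\{\varphi_j\}_{j=1}^n\subset\mathbb{C}^d$ be an equiangular tight frame which is triply covariant. Then $d=1$, $n=d$, or $n=d+1$. (That is, the only non-trivial triply covariant equiangular tight frames are orthonormal bases and simplices.)
   Context: A set $\Phi=\{\varphi_j\}_{j=1}^n\subset\mathbb{C}^d$ is an equiangular tight frame (ETF) if (1) for all $x\in\mathbb{C}^d$, $x=\frac{d}{n}\sum_{j=1}^n\langle x,\varphi_j\rangle\varphi_j$; (2) $\|\varphi_j\|=1$ for all $j$; (3) there is $\alpha\ge 0$ with $|\langle\varphi_j,\varphi_k\rangle|=\alpha$ for all $j\neq k$. Let $G$ be the group of unitary operators $U$ on $\mathbb{C}^d$ such that there is a permutation $\sigma$ of $\{1,\dots,n\}$ with $U\varphi_j\varphi_j^*U^*=\varphi_{\sigma(j)}\varphi_{\sigma(j)}^*$ for all $j$; the symmetry group of $\Phi$ is $G/S^1$ (i.e. $G$ modulo global unimodular phase factors), which acts on $\{1,\dots,n\}$ via these permutations. $\Phi$ is called $k$-covariant if this action is $k$-transitive, i.e. maps every ordered $k$-tuple of distinct indices to every ordered $k$-tuple of distinct indices; triply covariant means $3$-covariant. The triple product is $\mathrm{TP}(j,k,\ell)=\langle\varphi_j,\varphi_k\rangle\langle\varphi_k,\varphi_\ell\rangle\langle\varphi_\ell,\varphi_j\rangle$, and $\Phi$ is a simplex if all triple products of distinct indices are real and negative. *)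

theory Defs
  imports "HOL-Analysis.Analysis"
begin

text \<open>Vectors in C^d are complex^'d with d = CARD('d); frame vectors are indexed by {1..n}.\<close>

definition cinner :: "complex^'d \<Rightarrow> complex^'d \<Rightarrow> complex" where
  "cinner x y = (\<Sum>i\<in>UNIV. x$i * cnj (y$i))"

definition cadj :: "complex^'d^'d \<Rightarrow> complex^'d^'d" where
  "cadj U = (\<chi> i j. cnj (U$j$i))"

definition unitary :: "complex^'d^'d \<Rightarrow> bool" where
  "unitary U \<longleftrightarrow> U ** cadj U = mat 1 \<and> cadj U ** U = mat 1"

definition outer :: "complex^'d \<Rightarrow> complex^'d^'d" where
  "outer v = (\<chi> i j. v$i * cnj (v$j))"

definition is_ETF :: "nat \<Rightarrow> (nat \<Rightarrow> complex^'d) \<Rightarrow> bool" where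
  "is_ETF n \<phi> \<longleftrightarrow>
     (\<forall>x::complex^'d. x = complex_of_real (real CARD('d) / real n) *s
                         (\<Sum>j\<in>{1..n}. cinner x (\<phi> j) *s \<phi> j))
   \<and> (\<forall>j\<in>{1..n}. norm (\<phi> j) = 1)
   \<and> (\<exists>\<alpha>::real. \<alpha> \<ge> 0 \<and> (\<forall>j\<in>{1..n}. \<forall>k\<in>{1..n}. j \<noteq> k \<longrightarrow> cmod (cinner (\<phi> j) (\<phi> k)) = \<alpha>))"

text \<open>Permutations of the index set induced by the symmetry group (unitaries modulo phases).\<close>
definition induced_perms :: "nat \<Rightarrow> (nat \<Rightarrow> complex^'d) \<Rightarrow> (nat \<Rightarrow> nat) set" where
  "induced_perms n \<phi> = {\<sigma>. \<sigma> permutes {1..n} \<and>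
      (\<exists>U::complex^'d^'d. unitary U \<and>
          (\<forall>j\<in>{1..n}. U ** outer (\<phi> j) ** cadj U = outer (\<phi> (\<sigma> j))))}"

text \<open>k-covariance: the action is k-transitive on ordered k-tuples of distinct indices
  (tuples are functions on {..<k}).\<close>
definition k_covariant :: "nat \<Rightarrow> nat \<Rightarrow> (nat \<Rightarrow> complex^'d) \<Rightarrow> bool" where
  "k_covariant k n \<phi> \<longleftrightarrow>
     (\<forall>a b. inj_on a {..<k} \<and> a ` {..<k} \<subseteq> {1..n} \<and>
            inj_on b {..<k} \<and> b ` {..<k} \<subseteq> {1..n} \<longrightarrow>
        (\<exists>\<sigma>\<in>induced_perms n \<phi>. \<forall>i<k. \<sigma> (a i) = b i))"

end

theory Submission
  imports Defs
begin

lemma cinner_scale_left: "cinner (a *s x) y = a * cinner x y"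
  by (simp add: cinner_def sum_distrib_left mult.assoc)

lemma cinner_sum_left: "cinner (\<Sum>j\<in>S. f j) y = (\<Sum>j\<in>S. cinner (f j) y)"
  unfolding cinner_def
  by (induct S rule: infinite_finite_induct) (auto simp: sum.distrib distrib_right)

lemma cinner_cnj: "cnj (cinner x y) = cinner y x"
  by (simp add: cinner_def mult.commute)

lemma cinner_self: "cinner x x = complex_of_real ((norm x)^2)"
proof -
  have "cinner x x = (\<Sum>i\<in>UNIV. complex_of_real ((cmod (x$i))^2))"
    unfolding cinner_def by (rule sum.cong[OF refl]) (rule complex_norm_square[symmetric])
  also have "\<dots> = complex_of_real (\<Sum>i\<in>UNIV. (cmod (x$i))^2)" by simp
  also have "(\<Sum>i\<in>UNIV. (cmod (x$i))^2) = (norm x)^2"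
    unfolding norm_vec_def L2_set_def by (simp add: sum_nonneg)
  finally show ?thesis .
qed

definition r1 :: "complex^'d \<Rightarrow> complex^'d \<Rightarrow> complex^'d^'d" where
  "r1 a b = (\<chi> i j. a$i * cnj (b$j))"

lemma outer_r1: "outer v = r1 v v" by (simp add: outer_def r1_def)

lemma r1_mult: "r1 a b ** r1 c e = r1 (cinner c b *s a) e"
  unfolding r1_def matrix_matrix_mult_def cinner_def
  by (simp add: vec_eq_iff sum_distrib_left sum_distrib_right mult_ac)

lemma trace_r1: "trace (r1 a b) = cinner a b"
  by (simp add: trace_def r1_def cinner_def)

lemma trace3: "trace (outer a ** outer b ** outer c) = cinner b a * cinner c b * cinner a c"
  by (simp add: outer_r1 r1_mult trace_r1 cinner_scale_left)

lemma trace_conj: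
  assumes "unitary U"
  shows "trace ((U ** A ** cadj U) ** (U ** B ** cadj U) ** (U ** C ** cadj U)) = trace (A ** B ** C)"
proof -
  have u: "cadj U ** U = mat 1" using assms unitary_def by blast
  have u': "cadj U ** (U ** X) = X" for X :: "complex^'a^'a"
    by (simp add: matrix_mul_assoc u)
  have "(U ** A ** cadj U) ** (U ** B ** cadj U) ** (U ** C ** cadj U) = U ** ((A ** B ** C) ** cadj U)"
    by (simp add: matrix_mul_assoc[symmetric] u')
  hence "trace ((U ** A ** cadj U) ** (U ** B ** cadj U) ** (U ** C ** cadj U)) = trace (((A ** B ** C) ** cadj U) ** U)"
    by (metis trace_mul_sym)
  also have "\<dots> = trace (A ** B ** C)" by (simp add: matrix_mul_assoc[symmetric] u)
  finally show ?thesis .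
qed


lemma final_alg:
  fixes N D a t :: real
  assumes N0: "N > 0" and h1: "N = D + D * (N - 1) * a^2"
    and h2: "N * a^2 = D * (2 * a^2 + (N - 2) * t)" and h3: "t^2 = a^6"
  shows "D = 1 \<or> N = D \<or> N = D + 1"
proof (cases "a = 0")
  case True then show ?thesis using h1 by simp
next
  case False
  hence a4: "a^4 > 0" by simp
  have e1: "D * (N - 2) * t = (N - 2 * D) * a^2" using h2 by (simp add: algebra_simps)
  have l: "(D * (N - 2) * t)^2 = (D^2 * (N-2)^2 * a^2) * a^4"
  proof -
    have "(D * (N - 2) * t)^2 = D^2 * (N-2)^2 * t^2" by (simp add: power_mult_distrib)
    also have "\<dots> = D^2 * (N-2)^2 * (a^2 * a^4)" using h3 by (simp add: power_add[symmetric])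
    finally show ?thesis by (simp add: mult_ac)
  qed
  have r: "((N - 2 * D) * a^2)^2 = (N - 2*D)^2 * a^4"
    by (simp add: power_mult_distrib power_mult[symmetric])
  have "(D^2 * (N-2)^2 * a^2) * a^4 = (N - 2*D)^2 * a^4" using e1 l r by metis
  hence e2: "D^2 * (N-2)^2 * a^2 = (N - 2*D)^2" using a4 by simp
  have e3: "D * (N - 1) * a^2 = N - D" using h1 by simp
  have "D * (N-2)^2 * (N - D) = D * (N-2)^2 * (D * (N - 1) * a^2)" using e3 by simp
  also have "\<dots> = (D^2 * (N-2)^2 * a^2) * (N - 1)" by (simp add: power2_eq_square mult_ac)
  also have "\<dots> = (N-2*D)^2 * (N - 1)" using e2 by simp
  finally have e4: "D * (N-2)^2 * (N - D) = (N-2*D)^2 * (N - 1)" .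
  have id: "(D - 1) * (N - D - 1) * N^2 = D * (N-2)^2 * (N - D) - (N-2*D)^2 * (N - 1)"
    by (simp add: power2_eq_square algebra_simps)
  hence "(D - 1) * (N - D - 1) * N^2 = 0" using e4 by simp
  thus ?thesis using N0 by auto
qed

theorem mainTheorem1:
  fixes \<phi> :: "nat \<Rightarrow> complex^'d" and n :: nat
  assumes "is_ETF n \<phi>" and "k_covariant 3 n \<phi>"
  shows "CARD('d) = 1 \<or> n = CARD('d) \<or> n = CARD('d) + 1"
proof -
  define D where "D = real CARD('d)"
  define N where "N = real n"
  define c where "c = complex_of_real (D / N)"
  define g where "g a b = cinner (\<phi> a) (\<phi> b)" for a b
  from assms(1) have F: "\<And>x::complex^'d. x = c *s (\<Sum>j\<in>{1..n}. cinner x (\<phi> j) *s \<phi> j)"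
    and Nm: "\<And>j. j \<in> {1..n} \<Longrightarrow> norm (\<phi> j) = 1"
    unfolding is_ETF_def c_def D_def N_def by auto
  from assms(1) obtain \<alpha> :: real where a0: "\<alpha> \<ge> 0"
    and A: "\<And>j k. j \<in> {1..n} \<Longrightarrow> k \<in> {1..n} \<Longrightarrow> j \<noteq> k \<Longrightarrow> cmod (g j k) = \<alpha>"
    unfolding is_ETF_def g_def by blast
  have n0: "n \<noteq> 0"
  proof
    assume "n = 0"
    hence "(vec 1 :: complex^'d) = 0" using F[of "vec 1"] by (simp add: c_def N_def)
    thus False by (metis vec_component zero_index zero_neq_one)
  qed
  have gram: "g k m = c * (\<Sum>j\<in>{1..n}. g k j * g j m)" if "k \<in> {1..n}" "m \<in> {1..n}" for k m
  proof -
    have "g k m = cinner (c *s (\<Sum>j\<in>{1..n}. cinner (\<phi> k) (\<phi> j) *s \<phi> j)) (\<phi> m)"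
      unfolding g_def using F[of "\<phi> k"] by simp
    also have "\<dots> = c * (\<Sum>j\<in>{1..n}. g k j * g j m)"
      by (simp add: cinner_scale_left cinner_sum_left g_def)
    finally show ?thesis .
  qed
  have gself: "g k k = 1" if "k \<in> {1..n}" for k
    using Nm[OF that] by (simp add: g_def cinner_self)
  have gsym: "g k j = cnj (g j k)" for j k by (simp add: g_def cinner_cnj)
  have gpair: "g j k * g k j = complex_of_real (\<alpha>^2)" if "j \<in> {1..n}" "k \<in> {1..n}" "j \<noteq> k" for j k
    using A[OF that] gsym[of k j] complex_norm_square[of "g j k"] by simp
  have one: "1 \<in> {1..n}" using n0 by simp
  have card1: "card ({1..n}-{1}) = n - 1" using one by (simp add: card_Diff_singleton)
  have diag: "N = D + D * (N - 1) * \<alpha>^2"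
  proof -
    have "(\<Sum>j\<in>{1..n}. g 1 j * g j 1) = g 1 1 * g 1 1 + (\<Sum>j\<in>{1..n}-{1}. g 1 j * g j 1)"
      by (meson finite_atLeastAtMost one sum.remove)
    also have "(\<Sum>j\<in>{1..n}-{1}. g 1 j * g j 1) = (\<Sum>j\<in>{1..n}-{1}. complex_of_real (\<alpha>^2))"
      by (rule sum.cong[OF refl]) (use gpair one in auto)
    finally have "(\<Sum>j\<in>{1..n}. g 1 j * g j 1) = complex_of_real (1 + real (n - 1) * \<alpha>^2)"
      using gself[OF one] card1 by simp
    hence "complex_of_real 1 = complex_of_real (D / N * (1 + real (n - 1) * \<alpha>^2))"
      using gram[OF one one] gself[OF one] by (simp add: c_def)
    hence e0: "1 = D / N * (1 + real (n - 1) * \<alpha>^2)" using of_real_eq_iff by blast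
    have rn: "real (n - 1) = N - 1" using n0 by (simp add: N_def)
    have e: "1 = D / N * (1 + (N - 1) * \<alpha>^2)" using e0 unfolding rn .
    have Npos: "N > 0" using n0 by (simp add: N_def)
    have "N = N * (D / N * (1 + (N - 1) * \<alpha>^2))" using e by simp
    also have "\<dots> = D * (1 + (N - 1) * \<alpha>^2)" using Npos by simp
    finally show ?thesis by (simp add: algebra_simps)
  qed
  have Npos: "N > 0" using n0 by (simp add: N_def)
  have Dpos: "D \<ge> 1" unfolding D_def using finite_UNIV_card_ge_0[where 'a='d] by simp
  consider "n = 1" | "n = 2" | "n \<ge> 3" using n0 by linarith
  then show ?thesis
  proof cases
    case 1
    then have "D = 1" using diag by (simp add: N_def)
    then show ?thesis by (simp add: D_def)
  next
    case 2
    then have "2 = D + D * \<alpha>^2" using diag by (simp add: N_def)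
    moreover have "D * \<alpha>^2 \<ge> 0" using Dpos by simp
    ultimately have "D \<le> 2" by linarith
    hence "CARD('d) \<le> 2" "CARD('d) \<ge> 1" using Dpos by (simp_all add: D_def)
    hence "CARD('d) = 1 \<or> CARD('d) = 2" by linarith
    then show ?thesis using 2 by auto
  next
    case 3
    define Q where "Q j k l = trace (outer (\<phi> j) ** outer (\<phi> k) ** outer (\<phi> l))" for j k l
    have Qg: "Q j k l = g k j * g l k * g j l" for j k l
      unfolding Q_def g_def by (rule trace3)
    have inv: "Q (\<sigma> j) (\<sigma> k) (\<sigma> l) = Q j k l"
      if "\<sigma> \<in> induced_perms n \<phi>" "j \<in> {1..n}" "k \<in> {1..n}" "l \<in> {1..n}" for \<sigma> j k l
    proof -
      from that(1) obtain U where U: "unitary U"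
        and UP: "\<And>j. j \<in> {1..n} \<Longrightarrow> U ** outer (\<phi> j) ** cadj U = outer (\<phi> (\<sigma> j))"
        unfolding induced_perms_def by blast
      show ?thesis unfolding Q_def
        using trace_conj[OF U, of "outer (\<phi> j)" "outer (\<phi> k)" "outer (\<phi> l)"]
        by (simp only: UP that)
    qed
    have trans: "Q j' k' l' = Q j k l"
      if "j \<in> {1..n}" "k \<in> {1..n}" "l \<in> {1..n}" "j \<noteq> k" "j \<noteq> l" "k \<noteq> l"
         "j' \<in> {1..n}" "k' \<in> {1..n}" "l' \<in> {1..n}" "j' \<noteq> k'" "j' \<noteq> l'" "k' \<noteq> l'"
      for j k l j' k' l'
    proof -
      define a where "a i = (if i = 0 then j else if i = 1 then k else l)" for i :: nat
      define b where "b i = (if i = 0 then j' else if i = 1 then k' else l')" for i :: nat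
      have three: "{..<3::nat} = {0,1,2}" by auto
      have av: "a 0 = j" "a 1 = k" "a 2 = l" by (simp_all add: a_def)
      have bv: "b 0 = j'" "b 1 = k'" "b 2 = l'" by (simp_all add: b_def)
      have "inj_on a {..<3}" unfolding three using av that(4-6) by auto
      moreover have "inj_on b {..<3}" unfolding three using bv that(10-12) by auto
      moreover have "a ` {..<3} \<subseteq> {1..n}" unfolding three using av that(1-3) by auto
      moreover have "b ` {..<3} \<subseteq> {1..n}" unfolding three using bv that(7-9) by auto
      ultimately have "inj_on a {..<3} \<and> a ` {..<3} \<subseteq> {1..n} \<and> inj_on b {..<3} \<and> b ` {..<3} \<subseteq> {1..n}"
        by blast
      then obtain \<sigma> where s: "\<sigma> \<in> induced_perms n \<phi>" and sab: "\<forall>i<3. \<sigma> (a i) = b i"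
        using assms(2)[unfolded k_covariant_def, rule_format, of a b] by blast
      have "\<sigma> j = j'" "\<sigma> k = k'" "\<sigma> l = l'"
        using sab[rule_format, of 0] sab[rule_format, of 1] sab[rule_format, of 2] av bv
        by simp_all
      thus ?thesis using inv[OF s that(1-3)] by simp
    qed
    have i1: "1 \<in> {1..n}" and i2: "2 \<in> {1..n}" and i3: "3 \<in> {1..n}" using 3 by auto
    define T where "T = Q 1 2 3"
    have "Q 2 1 3 = T" unfolding T_def by (rule trans) (use i1 i2 i3 in auto)
    moreover have "Q 2 1 3 = cnj T" unfolding T_def Qg
      using gsym[of 1 2] gsym[of 2 3] gsym[of 3 1] by (simp add: mult_ac)
    ultimately have "cnj T = T" by simp
    hence cT: "cnj T = T" .
    have ImT: "Im T = 0" using arg_cong[OF cT, of Im] by simp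
    define t where "t = Re T"
    have Tt: "T = complex_of_real t" unfolding t_def using ImT by (simp add: complex_eq_iff)
    have "cmod T = \<alpha> * \<alpha> * \<alpha>" unfolding T_def Qg norm_mult
      using A i1 i2 i3 by simp
    hence "\<bar>t\<bar> = \<alpha>^3" using Tt by (simp add: power3_eq_cube)
    hence "(\<bar>t\<bar>)^2 = (\<alpha>^3)^2" by simp
    hence t2: "t^2 = \<alpha>^6" by (simp add: power_mult[symmetric])
    have offd: "N * \<alpha>^2 = D * (2 * \<alpha>^2 + (N - 2) * t)"
    proof -
      have "g 1 2 * g 2 1 = c * (\<Sum>j\<in>{1..n}. g 1 j * g j 2 * g 2 1)"
      proof -
        have "g 1 2 * g 2 1 = c * (\<Sum>j\<in>{1..n}. g 1 j * g j 2) * g 2 1"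
          using gram[OF i1 i2] by simp
        also have "\<dots> = c * ((\<Sum>j\<in>{1..n}. g 1 j * g j 2) * g 2 1)" by (rule mult.assoc)
        also have "(\<Sum>j\<in>{1..n}. g 1 j * g j 2) * g 2 1 = (\<Sum>j\<in>{1..n}. g 1 j * g j 2 * g 2 1)"
          by (rule sum_distrib_right)
        finally show ?thesis .
      qed
      hence e: "complex_of_real (\<alpha>^2) = c * (\<Sum>j\<in>{1..n}. g 1 j * g j 2 * g 2 1)"
        using gpair[OF i1 i2] by simp
      have S1: "(\<Sum>j\<in>{1..n}. g 1 j * g j 2 * g 2 1) = g 1 1 * g 1 2 * g 2 1 + (\<Sum>j\<in>{1..n}-{1}. g 1 j * g j 2 * g 2 1)"
        by (meson finite_atLeastAtMost i1 sum.remove)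
      have S2: "(\<Sum>j\<in>{1..n}-{1}. g 1 j * g j 2 * g 2 1) = g 1 2 * g 2 2 * g 2 1 + (\<Sum>j\<in>{1..n}-{1}-{2}. g 1 j * g j 2 * g 2 1)"
        using i2 by (subst sum.remove[of _ 2]) auto
      have S3: "(\<Sum>j\<in>{1..n}-{1}-{2}. g 1 j * g j 2 * g 2 1) = (\<Sum>j\<in>{1..n}-{1}-{2}. T)"
      proof (rule sum.cong[OF refl])
        fix j assume j: "j \<in> {1..n}-{1}-{2}"
        have "g 1 j * g j 2 * g 2 1 = Q j 1 2" unfolding Qg by (simp add: mult_ac)
        also have "\<dots> = T" unfolding T_def by (rule trans) (use i1 i2 i3 j in auto)
        finally show "g 1 j * g j 2 * g 2 1 = T" .
      qed
      have c3: "card ({1..n}-{1}-{2}) = n - 2" using i1 i2 by (simp add: card_Diff_singleton)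
      have "complex_of_real (\<alpha>^2) = c * (2 * complex_of_real (\<alpha>^2) + of_nat (n - 2) * T)"
        using e S1 S2 S3 c3 gself[OF i1] gself[OF i2] gpair[OF i1 i2] by simp
      hence "complex_of_real (\<alpha>^2) = complex_of_real (D / N * (2 * \<alpha>^2 + real (n - 2) * t))"
        unfolding c_def Tt by simp
      hence e0: "\<alpha>^2 = D / N * (2 * \<alpha>^2 + real (n - 2) * t)" using of_real_eq_iff by blast
      have rn: "real (n - 2) = N - 2" using 3 by (simp add: N_def)
      have e1: "\<alpha>^2 = D / N * (2 * \<alpha>^2 + (N - 2) * t)" using e0 unfolding rn .
      have "N * \<alpha>^2 = N * (D / N * (2 * \<alpha>^2 + (N - 2) * t))" using e1 by simp
      also have "\<dots> = D * (2 * \<alpha>^2 + (N - 2) * t)" using Npos by simp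
      finally show ?thesis .
    qed
    have "D = 1 \<or> N = D \<or> N = D + 1" by (rule final_alg[OF Npos diag offd t2])
    then show ?thesis unfolding D_def N_def by linarith
  qed
qed
end
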